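(* Let $f$ be a real-analytic function of one real variable that is not identically zero. Consider on $\mathbb R^2$ the system $\ddot x_1=\dot x_1^2\,f(\dot x_2/\dot x_1)$, $\ddot x_2=\dot x_1\dot x_2\,f(\dot x_2/\dot x_1)$, i.e. the spray with $f^1=y_1^2f(y_2/y_1)$, $f^2=y_1y_2f(y_2/y_1)$ on the region $y_1\neq0$. Then this system is not the geodesic system of any non-Berwald Landsberg metric: there is no open set $U$ (in the domain of the spray) on which the Berwald curvature $\mathcal R$ is not identically zero and a function $E:U\to\mathbb R$ satisfying (H), (EL), (Ls) with $(g_{ij})$ positive definite.
   Context: Coordinates $(x^1,x^2,y^1,y^2)=(x_1,x_2,y_1,y_2)$ on $T\mathbb R^2$. For the spray $S=y^i\frac{\partial}{\partial x^i}+f^i\frac{\partial}{\partial y^i}$: $\Gamma^i_j=-\frac12\frac{\partial f^i}{\partial y^j}$, $\Gamma^i_{jk}=\frac{\partial\Gamma^i_j}{\partial y^k}$; Berwald curvature $\mathcal R=-\frac12\frac{\partial^3f^l}{\partial y^i\partial y^j\partial y^k}dx^i\otimes dx^j\otimes dx^k\otimes\frac{\partial}{\partial y^l}$ (a Landsberg metric is of Berwald type iff $\mathcal R=0$). For $E$ smooth, $g_{ij}=\frac{\partial^2E}{\partial y^i\partial y^j}$; (H) $y^i\frac{\partial E}{\partial y^i}-2E=0$; (EL) $y^j\frac{\partial^2E}{\partial x^j\partial y^i}+f^j\frac{\partial^2E}{\partial y^j\partial y^i}-\frac{\partial E}{\partial x^i}=0$; (Ls) $\frac{\partial g_{jk}}{\partial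 x^i}-\Gamma^l_i\frac{\partial g_{jk}}{\partial y^l}-\Gamma^l_{ik}g_{lj}-\Gamma^l_{ij}g_{lk}=0$. *)

theory Defs
  imports "HOL-Analysis.Analysis"
begin

definition real_analytic :: "(real \<Rightarrow> real) \<Rightarrow> bool" where
  "real_analytic f \<longleftrightarrow> (\<forall>x0. \<exists>r>0. \<exists>a::nat \<Rightarrow> real.
      \<forall>x. \<bar>x - x0\<bar> < r \<longrightarrow> (\<lambda>n. a n * (x - x0) ^ n) sums f x)"

text \<open>Points of T R^2 are (x1, x2, y1, y2); coordinate index 0,1,2,3 respectively.\<close>
type_synonym pt = "real \<times> real \<times> real \<times> real"

fun coord :: "nat \<Rightarrow> pt \<Rightarrow> real" where
  "coord k (a, b, c, d) = (if k = 0 then a else if k = 1 then b else if k = 2 then c else d)"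

fun upd :: "nat \<Rightarrow> real \<Rightarrow> pt \<Rightarrow> pt" where
  "upd k t (a, b, c, d) =
     (if k = 0 then (t, b, c, d) else if k = 1 then (a, t, c, d)
      else if k = 2 then (a, b, t, d) else (a, b, c, t))"

definition pd :: "nat \<Rightarrow> (pt \<Rightarrow> real) \<Rightarrow> pt \<Rightarrow> real" where
  "pd k F p = deriv (\<lambda>t. F (upd k t p)) (coord k p)"

fun pdl :: "nat list \<Rightarrow> (pt \<Rightarrow> real) \<Rightarrow> pt \<Rightarrow> real" where
  "pdl [] F = F"
| "pdl (k # ks) F = pd k (pdl ks F)"

definition smooth_on :: "pt set \<Rightarrow> (pt \<Rightarrow> real) \<Rightarrow> bool" where
  "smooth_on U F \<longleftrightarrow> (\<forall>ks. set ks \<subseteq> {..<4} \<longrightarrow>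
      continuous_on U (pdl ks F) \<and>
      (\<forall>k<4. \<forall>p\<in>U. ((\<lambda>t. pdl ks F (upd k t p)) has_real_derivative pdl (k # ks) F p)
                         (at (coord k p))))"

definition dX :: "nat \<Rightarrow> (pt \<Rightarrow> real) \<Rightarrow> pt \<Rightarrow> real" where
  "dX i F = pd (i - 1) F"
definition dY :: "nat \<Rightarrow> (pt \<Rightarrow> real) \<Rightarrow> pt \<Rightarrow> real" where
  "dY i F = pd (i + 1) F"

definition ycoord :: "nat \<Rightarrow> pt \<Rightarrow> real" where
  "ycoord i p = coord (i + 1) p"

definition Idx :: "nat set" where "Idx = {1, 2}"

definition spray_f :: "(real \<Rightarrow> real) \<Rightarrow> nat \<Rightarrow> pt \<Rightarrow> real" where
  "spray_f f l p = (let y1 = ycoord 1 p; y2 = ycoord 2 p in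
      if l = 1 then y1\<^sup>2 * f (y2 / y1) else y1 * y2 * f (y2 / y1))"

definition spray_domain :: "pt set" where
  "spray_domain = {p. ycoord 1 p \<noteq> 0}"

definition Gam1 :: "(real \<Rightarrow> real) \<Rightarrow> nat \<Rightarrow> nat \<Rightarrow> pt \<Rightarrow> real" where
  "Gam1 f i j p = - (1/2) * dY j (spray_f f i) p"

definition Gam2 :: "(real \<Rightarrow> real) \<Rightarrow> nat \<Rightarrow> nat \<Rightarrow> nat \<Rightarrow> pt \<Rightarrow> real" where
  "Gam2 f i j k p = dY k (Gam1 f i j) p"

definition berwald :: "(real \<Rightarrow> real) \<Rightarrow> nat \<Rightarrow> nat \<Rightarrow> nat \<Rightarrow> nat \<Rightarrow> pt \<Rightarrow> real" where
  "berwald f l i j k p = - (1/2) * dY i (dY j (dY k (spray_f f l))) p"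

definition gmet :: "(pt \<Rightarrow> real) \<Rightarrow> nat \<Rightarrow> nat \<Rightarrow> pt \<Rightarrow> real" where
  "gmet E i j = dY i (dY j E)"

definition cond_H :: "(pt \<Rightarrow> real) \<Rightarrow> pt \<Rightarrow> bool" where
  "cond_H E p \<longleftrightarrow> (\<Sum>i\<in>Idx. ycoord i p * dY i E p) - 2 * E p = 0"

definition cond_EL :: "(real \<Rightarrow> real) \<Rightarrow> (pt \<Rightarrow> real) \<Rightarrow> pt \<Rightarrow> bool" where
  "cond_EL f E p \<longleftrightarrow> (\<forall>i\<in>Idx.
      (\<Sum>j\<in>Idx. ycoord j p * dX j (dY i E) p) + (\<Sum>j\<in>Idx. spray_f f j p * dY j (dY i E) p)
      - dX i E p = 0)"

definition cond_Ls :: "(real \<Rightarrow> real) \<Rightarrow> (pt \<Rightarrow> real) \<Rightarrow> pt \<Rightarrow> bool" where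
  "cond_Ls f E p \<longleftrightarrow> (\<forall>i\<in>Idx. \<forall>j\<in>Idx. \<forall>k\<in>Idx.
      dX i (gmet E j k) p - (\<Sum>l\<in>Idx. Gam1 f l i p * dY l (gmet E j k) p)
      - (\<Sum>l\<in>Idx. Gam2 f l i k p * gmet E l j p)
      - (\<Sum>l\<in>Idx. Gam2 f l i j p * gmet E l k p) = 0)"

definition pos_def_at :: "(pt \<Rightarrow> real) \<Rightarrow> pt \<Rightarrow> bool" where
  "pos_def_at E p \<longleftrightarrow> (\<forall>v :: nat \<Rightarrow> real. (\<exists>i\<in>Idx. v i \<noteq> 0) \<longrightarrow>
      (\<Sum>i\<in>Idx. \<Sum>j\<in>Idx. gmet E i j p * v i * v j) > 0)"

end

theory Submission
  imports Defs
begin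


lemma real_analytic_deriv:
  assumes "real_analytic f"
  shows "(\<forall>x. (f has_real_derivative deriv f x) (at x)) \<and> real_analytic (deriv f)"
proof -
  have key: "\<exists>r>0. \<exists>a. \<forall>x. \<bar>x - x0\<bar> < r \<longrightarrow>
      (f has_real_derivative (\<Sum>n. diffs a n * (x - x0) ^ n)) (at x) \<and>
      (\<lambda>n. diffs a n * (x - x0) ^ n) sums (\<Sum>n. diffs a n * (x - x0) ^ n)" for x0
  proof -
    obtain r a where r: "r > 0" and ra: "\<And>x. \<bar>x - x0\<bar> < r \<Longrightarrow> (\<lambda>n. a n * (x - x0) ^ n) sums f x"
      using assms unfolding real_analytic_def by blast
    have sm: "summable (\<lambda>n. a n * z ^ n)" if "norm z < r" for z :: real
      using ra[of "z + x0"] that by (auto simp: sums_iff)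
    show ?thesis
    proof (intro exI[of _ r] conjI r exI[of _ a] allI impI)
      fix x assume x: "\<bar>x - x0\<bar> < r"
      have d: "((\<lambda>z. \<Sum>n. a n * z ^ n) has_real_derivative (\<Sum>n. diffs a n * (x - x0) ^ n)) (at (x - x0))"
        by (rule termdiffs_strong'[of r]) (use sm x in auto)
      have d2: "((\<lambda>y. \<Sum>n. a n * (y - x0) ^ n) has_real_derivative (\<Sum>n. diffs a n * (x - x0) ^ n)) (at x)"
        using DERIV_chain2[where f="\<lambda>z. \<Sum>n. a n * z ^ n" and g="\<lambda>y. y - x0", OF d, of 1 UNIV] 
        by (simp add: DERIV_diff[OF DERIV_ident DERIV_const, simplified])
      show "(f has_real_derivative (\<Sum>n. diffs a n * (x - x0) ^ n)) (at x)"
      proof (rule has_field_derivative_transform_within_open[OF d2, of "{y. \<bar>y - x0\<bar> < r}"])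
        show "open {y. \<bar>y - x0\<bar> < r}"
          by (intro open_Collect_less continuous_intros)
        show "x \<in> {y. \<bar>y - x0\<bar> < r}" using x by simp
        fix y assume "y \<in> {y. \<bar>y - x0\<bar> < r}"
        then show "(\<Sum>n. a n * (y - x0) ^ n) = f y" using ra sums_unique by (metis mem_Collect_eq)
      qed
      show "(\<lambda>n. diffs a n * (x - x0) ^ n) sums (\<Sum>n. diffs a n * (x - x0) ^ n)"
        by (rule summable_sums, rule termdiff_converges[of _ r]) (use sm x in auto)
    qed
  qed
  have D: "(f has_real_derivative deriv f x) (at x)" for x
  proof -
    obtain r a where "r > 0" and h: "\<forall>y. \<bar>y - x\<bar> < r \<longrightarrow>
      (f has_real_derivative (\<Sum>n. diffs a n * (y - x) ^ n)) (at y)"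
      using key[of x] by blast
    then have "(f has_real_derivative (\<Sum>n. diffs a n * (x - x) ^ n)) (at x)"
      by (metis abs_0 diff_self)
    then show ?thesis using DERIV_imp_deriv by metis
  qed
  have "real_analytic (deriv f)"
    unfolding real_analytic_def
  proof
    fix x0
    obtain r a where r: "r > 0" and h: "\<forall>x. \<bar>x - x0\<bar> < r \<longrightarrow>
      (f has_real_derivative (\<Sum>n. diffs a n * (x - x0) ^ n)) (at x) \<and>
      (\<lambda>n. diffs a n * (x - x0) ^ n) sums (\<Sum>n. diffs a n * (x - x0) ^ n)"
      using key[of x0] by blast
    show "\<exists>r>0. \<exists>a. \<forall>x. \<bar>x - x0\<bar> < r \<longrightarrow> (\<lambda>n. a n * (x - x0) ^ n) sums deriv f x"
    proof (intro exI[of _ r] conjI r exI[of _ "diffs a"] allI impI)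
      fix x assume x: "\<bar>x - x0\<bar> < r"
      then show "(\<lambda>n. diffs a n * (x - x0) ^ n) sums deriv f x"
        using h DERIV_imp_deriv by metis
    qed
  qed
  with D show ?thesis by blast
qed



lemma idx4: "k < (4::nat) \<Longrightarrow> k = 0 \<or> k = 1 \<or> k = 2 \<or> k = 3" by auto

lemma coord_upd: "j < 4 \<Longrightarrow> k < 4 \<Longrightarrow> coord j (upd k t p) = (if j = k then t else coord j p)"
  by (cases p) (auto dest!: idx4)

lemma coord_upd_same: "coord k (upd k t p) = t"
  by (cases p) auto

lemma upd_coord: "upd k (coord k p) p = p"
  by (cases p) auto

lemma upd_upd: "upd k s (upd k t p) = upd k s p"
  by (cases p) auto

lemma upd_comm: "j < 4 \<Longrightarrow> k < 4 \<Longrightarrow> j \<noteq> k \<Longrightarrow> upd j s (upd k t p) = upd k t (upd j s p)"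
  by (cases p) (auto dest!: idx4)

lemma dist_upd: "dist (upd k t p) p = \<bar>t - coord k p\<bar>"
  by (cases p) (auto simp: dist_Pair_Pair dist_real_def)

lemma continuous_upd: "continuous_on UNIV (\<lambda>t. upd k t p)"
  by (cases p; cases "k = 0"; cases "k = 1"; cases "k = 2") (auto intro!: continuous_intros)

lemma ev_upd:
  assumes "open S" "p \<in> S"
  shows "eventually (\<lambda>t. upd k t p \<in> S) (nhds (coord k p))"
proof -
  have "isCont (\<lambda>t. upd k t p) (coord k p)"
    using continuous_upd continuous_on_eq_continuous_at by blast
  then have "((\<lambda>t. upd k t p) \<longlongrightarrow> p) (nhds (coord k p))"
    by (metis continuous_at_imp_continuous_at_within continuous_within tendsto_at_iff_tendsto_nhds upd_coord)
  then show ?thesis using assms by (rule topological_tendstoD)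
qed

definition hpd :: "nat \<Rightarrow> (pt \<Rightarrow> real) \<Rightarrow> pt \<Rightarrow> real \<Rightarrow> bool" where
  "hpd k F p D \<longleftrightarrow> ((\<lambda>t. F (upd k t p)) has_real_derivative D) (at (coord k p))"

lemma hpd_pd: "hpd k F p D \<Longrightarrow> pd k F p = D"
  unfolding hpd_def pd_def by (rule DERIV_imp_deriv)

lemma hpd_const: "hpd k (\<lambda>q. c) p 0"
  unfolding hpd_def by simp

lemma hpd_add: "hpd k F p a \<Longrightarrow> hpd k G p b \<Longrightarrow> hpd k (\<lambda>q. F q + G q) p (a + b)"
  unfolding hpd_def by (rule DERIV_add)

lemma hpd_diff: "hpd k F p a \<Longrightarrow> hpd k G p b \<Longrightarrow> hpd k (\<lambda>q. F q - G q) p (a - b)"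
  unfolding hpd_def by (rule DERIV_diff)

lemma hpd_minus: "hpd k F p a \<Longrightarrow> hpd k (\<lambda>q. - F q) p (- a)"
  unfolding hpd_def by (rule DERIV_minus)

lemma hpd_mult: "hpd k F p a \<Longrightarrow> hpd k G p b \<Longrightarrow> hpd k (\<lambda>q. F q * G q) p (F p * b + a * G p)"
  unfolding hpd_def by (drule (1) DERIV_mult) (simp add: upd_coord algebra_simps)

lemma hpd_cmult: "hpd k F p a \<Longrightarrow> hpd k (\<lambda>q. c * F q) p (c * a)"
  unfolding hpd_def by (rule DERIV_cmult)

lemma hpd_coord: "j < 4 \<Longrightarrow> k < 4 \<Longrightarrow> hpd k (coord j) p (if j = k then 1 else 0)"
  unfolding hpd_def by (auto simp: coord_upd)

lemma hpd_eq: "hpd k F p a \<Longrightarrow> a = b \<Longrightarrow> hpd k F p b" by simp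

lemma pd_local:
  assumes "open S" "p \<in> S" "\<And>q. q \<in> S \<Longrightarrow> F q = G q"
  shows "pd k F p = pd k G p"
  unfolding pd_def
  by (rule deriv_cong_ev[OF eventually_mono[OF ev_upd[OF assms(1,2)]]]) (use assms in auto)

lemma hpd_local:
  assumes "open S" "p \<in> S" "\<And>q. q \<in> S \<Longrightarrow> F q = G q" "hpd k G p D"
  shows "hpd k F p D"
proof -
  have ev: "eventually (\<lambda>t. G (upd k t p) = F (upd k t p)) (nhds (coord k p))"
    by (rule eventually_mono[OF ev_upd[OF assms(1,2)]]) (use assms(3) in auto)
  show ?thesis using assms(4) DERIV_cong_ev[OF refl ev refl] unfolding hpd_def by blast
qed

lemma hpd_zero:
  assumes "open S" "p \<in> S" "\<And>q. q \<in> S \<Longrightarrow> F q = 0" "hpd k F p D"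
  shows "D = 0"
proof -
  have "hpd k (\<lambda>q. 0) p D"
    by (rule hpd_local[OF assms(1,2) _ assms(4)]) (use assms(3) in auto)
  then show ?thesis using hpd_const unfolding hpd_def using DERIV_unique by blast
qed

lemma hpd_line:
  assumes "hpd i G (upd i (c + s) r) D"
  shows "((\<lambda>s. G (upd i (c + s) r)) has_real_derivative D) (at s)"
proof -
  have "((\<lambda>t. G (upd i t r)) has_real_derivative D) (at (s + c))"
    using assms unfolding hpd_def by (simp add: coord_upd_same upd_upd add.commute)
  then show ?thesis using DERIV_shift[of "\<lambda>t. G (upd i t r)" D s c] by (simp add: add.commute)
qed

lemma mixed_mvt:
  assumes ij: "i < 4" "j < 4" "i \<noteq> j" and h: "h > 0"
    and D: "\<And>s t. 0 \<le> s \<Longrightarrow> s \<le> h \<Longrightarrow> 0 \<le> t \<Longrightarrow> t \<le> h \<Longrightarrow>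
       hpd i G (upd i (coord i p + s) (upd j (coord j p + t) p)) (Gi (upd i (coord i p + s) (upd j (coord j p + t) p))) \<and>
       hpd j Gi (upd i (coord i p + s) (upd j (coord j p + t) p)) (Gij (upd i (coord i p + s) (upd j (coord j p + t) p)))"
  shows "\<exists>\<xi> \<eta>. 0 < \<xi> \<and> \<xi> < h \<and> 0 < \<eta> \<and> \<eta> < h \<and>
    G (upd i (coord i p + h) (upd j (coord j p + h) p)) - G (upd i (coord i p + h) (upd j (coord j p + 0) p))
    - G (upd i (coord i p + 0) (upd j (coord j p + h) p)) + G (upd i (coord i p + 0) (upd j (coord j p + 0) p))
    = h * h * Gij (upd i (coord i p + \<xi>) (upd j (coord j p + \<eta>) p))"
proof -
  define e where "e s t = upd i (coord i p + s) (upd j (coord j p + t) p)" for s t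
  have e2: "e s t = upd j (coord j p + t) (upd i (coord i p + s) p)" for s t
    unfolding e_def using upd_comm ij by auto
  have "\<exists>\<xi>. 0 < \<xi> \<and> \<xi> < h \<and> (G (e h h) - G (e h 0)) - (G (e 0 h) - G (e 0 0)) = (h - 0) * (Gi (e \<xi> h) - Gi (e \<xi> 0))"
  proof (rule MVT2[OF h, of "\<lambda>s. G (e s h) - G (e s 0)"])
    fix s assume s: "0 \<le> s" "s \<le> h"
    show "((\<lambda>s. G (e s h) - G (e s 0)) has_real_derivative Gi (e s h) - Gi (e s 0)) (at s)"
      unfolding e_def using D[of s h] D[of s 0] s h
      by (intro DERIV_diff hpd_line) auto
  qed
  then obtain \<xi> where xi: "0 < \<xi>" "\<xi> < h" and eq1: "G (e h h) - G (e h 0) - G (e 0 h) + G (e 0 0) = h * (Gi (e \<xi> h) - Gi (e \<xi> 0))"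
    by auto
  have "\<exists>\<eta>. 0 < \<eta> \<and> \<eta> < h \<and> Gi (e \<xi> h) - Gi (e \<xi> 0) = (h - 0) * Gij (e \<xi> \<eta>)"
  proof (rule MVT2[OF h, of "\<lambda>t. Gi (e \<xi> t)"])
    fix t assume t: "0 \<le> t" "t \<le> h"
    show "((\<lambda>t. Gi (e \<xi> t)) has_real_derivative Gij (e \<xi> t)) (at t)"
      unfolding e2 using D[of \<xi> t] t xi unfolding e2[unfolded e_def]
      by (intro hpd_line) auto
  qed
  then obtain \<eta> where eta: "0 < \<eta>" "\<eta> < h" and eq2: "Gi (e \<xi> h) - Gi (e \<xi> 0) = h * Gij (e \<xi> \<eta>)"
    by auto
  show ?thesis
    using xi eta eq1 eq2 unfolding e_def by (intro exI[of _ \<xi>] exI[of _ \<eta>]) auto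
qed

lemma cont_near:
  fixes F :: "pt \<Rightarrow> real"
  assumes "open U" "p \<in> U" "continuous_on U F" "e > 0"
  shows "\<exists>d>0. \<forall>q. dist q p < d \<longrightarrow> \<bar>F q - F p\<bar> < e"
proof -
  have "isCont F p" using assms continuous_on_eq_continuous_at by blast
  then obtain d where d: "d > 0" "\<forall>x. x \<noteq> p \<and> dist x p < d \<longrightarrow> dist (F x) (F p) < e"
    unfolding isCont_def using metric_LIM_D assms(4) by blast
  show ?thesis
  proof (rule exI[of _ d], intro conjI allI impI)
    fix q assume "dist q p < d"
    then show "\<bar>F q - F p\<bar> < e" using d(2)[rule_format, of q] assms(4) by (cases "q = p") (auto simp: dist_real_def)
  qed (use d in auto)
qed

lemma dist_upd2:
  assumes "i < 4" "j < 4" "i \<noteq> j"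
  shows "dist (upd i (coord i p + s) (upd j (coord j p + t) p)) p \<le> \<bar>s\<bar> + \<bar>t\<bar>"
proof -
  have "dist (upd i (coord i p + s) (upd j (coord j p + t) p)) p \<le>
     dist (upd i (coord i p + s) (upd j (coord j p + t) p)) (upd j (coord j p + t) p) + dist (upd j (coord j p + t) p) p"
    by (rule dist_triangle)
  also have "\<dots> = \<bar>s\<bar> + \<bar>t\<bar>"
    unfolding dist_upd using assms by (simp add: coord_upd)
  finally show ?thesis .
qed

lemma schwarz:
  fixes G Gi Gj Gij Gji :: "pt \<Rightarrow> real"
  assumes U: "open U" "p \<in> U" and ij: "i < 4" "j < 4" "i \<noteq> j"
    and Gi: "\<forall>q\<in>U. hpd i G q (Gi q)" and Gj: "\<forall>q\<in>U. hpd j G q (Gj q)"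
    and Gij: "\<forall>q\<in>U. hpd j Gi q (Gij q)" and Gji: "\<forall>q\<in>U. hpd i Gj q (Gji q)"
    and c1: "continuous_on U Gij" and c2: "continuous_on U Gji"
  shows "Gij p = Gji p"
proof (rule ccontr)
  assume ne: "Gij p \<noteq> Gji p"
  define e where "e = \<bar>Gij p - Gji p\<bar> / 2"
  have e: "e > 0" using ne unfolding e_def by auto
  obtain \<delta> where \<delta>: "\<delta> > 0" "ball p \<delta> \<subseteq> U" using U open_contains_ball by blast
  obtain d1 where d1: "d1 > 0" "\<forall>q. dist q p < d1 \<longrightarrow> \<bar>Gij q - Gij p\<bar> < e"
    using cont_near[OF U c1 e] by blast
  obtain d2 where d2: "d2 > 0" "\<forall>q. dist q p < d2 \<longrightarrow> \<bar>Gji q - Gji p\<bar> < e"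
    using cont_near[OF U c2 e] by blast
  define h where "h = min \<delta> (min d1 d2) / 3"
  have h: "h > 0" using \<delta> d1 d2 unfolding h_def by auto
  have inU: "upd a (coord a p + s) (upd b (coord b p + t) p) \<in> U \<and>
      dist (upd a (coord a p + s) (upd b (coord b p + t) p)) p < d1 \<and>
      dist (upd a (coord a p + s) (upd b (coord b p + t) p)) p < d2"
    if "a < 4" "b < 4" "a \<noteq> b" "0 \<le> s" "s \<le> h" "0 \<le> t" "t \<le> h" for a b s t
  proof -
    have "dist (upd a (coord a p + s) (upd b (coord b p + t) p)) p \<le> s + t"
      using dist_upd2[OF that(1-3), of p s t] that by simp
    also have "\<dots> \<le> 2 * h" using that by simp
    finally have dd: "dist (upd a (coord a p + s) (upd b (coord b p + t) p)) p \<le> 2 * h" .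
    have "2 * h < \<delta>" "2 * h < d1" "2 * h < d2" using h \<delta> d1 d2 unfolding h_def by auto
    then show ?thesis using dd \<delta>(2) by (auto simp: dist_commute)
  qed
  obtain \<xi> \<eta> where xe: "0 < \<xi>" "\<xi> < h" "0 < \<eta>" "\<eta> < h" and eq1:
    "G (upd i (coord i p + h) (upd j (coord j p + h) p)) - G (upd i (coord i p + h) (upd j (coord j p + 0) p))
    - G (upd i (coord i p + 0) (upd j (coord j p + h) p)) + G (upd i (coord i p + 0) (upd j (coord j p + 0) p))
    = h * h * Gij (upd i (coord i p + \<xi>) (upd j (coord j p + \<eta>) p))"
    using mixed_mvt[OF ij h, of G p Gi Gij] inU[OF ij] Gi Gij by blast
  obtain \<xi>' \<eta>' where xe': "0 < \<xi>'" "\<xi>' < h" "0 < \<eta>'" "\<eta>' < h" and eq2: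
    "G (upd j (coord j p + h) (upd i (coord i p + h) p)) - G (upd j (coord j p + h) (upd i (coord i p + 0) p))
    - G (upd j (coord j p + 0) (upd i (coord i p + h) p)) + G (upd j (coord j p + 0) (upd i (coord i p + 0) p))
    = h * h * Gji (upd j (coord j p + \<xi>') (upd i (coord i p + \<eta>') p))"
    using mixed_mvt[OF ij(2,1) ij(3)[symmetric] h, of G p Gj Gji] inU[OF ij(2,1) ij(3)[symmetric]] Gj Gji by blast
  have comm: "upd j (coord j p + a) (upd i (coord i p + b) p) = upd i (coord i p + b) (upd j (coord j p + a) p)" for a b
    using upd_comm ij by auto
  have "h * h * Gij (upd i (coord i p + \<xi>) (upd j (coord j p + \<eta>) p)) =
        h * h * Gji (upd j (coord j p + \<xi>') (upd i (coord i p + \<eta>') p))"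
    using eq1 eq2 unfolding comm by linarith
  then have eqG: "Gij (upd i (coord i p + \<xi>) (upd j (coord j p + \<eta>) p)) =
        Gji (upd j (coord j p + \<xi>') (upd i (coord i p + \<eta>') p))" using h by simp
  have a1: "\<bar>Gij (upd i (coord i p + \<xi>) (upd j (coord j p + \<eta>) p)) - Gij p\<bar> < e"
  proof -
    have "dist (upd i (coord i p + \<xi>) (upd j (coord j p + \<eta>) p)) p < d1"
      using inU[OF ij, of \<xi> \<eta>] xe by auto
    then show ?thesis using d1(2) by blast
  qed
  have a2: "\<bar>Gji (upd j (coord j p + \<xi>') (upd i (coord i p + \<eta>') p)) - Gji p\<bar> < e"
  proof -
    have "dist (upd j (coord j p + \<xi>') (upd i (coord i p + \<eta>') p)) p < d2"
      using inU[OF ij(2,1) ij(3)[symmetric], of \<xi>' \<eta>'] xe' by auto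
    then show ?thesis using d2(2) by blast
  qed
  have aux: "\<bar>a - x\<bar> < \<bar>x - y\<bar> / 2 \<Longrightarrow> \<bar>b - y\<bar> < \<bar>x - y\<bar> / 2 \<Longrightarrow> a = b \<Longrightarrow> False" for a b x y :: real
    by (auto simp: abs_if split: if_splits)
  show False using aux[OF a1[unfolded e_def] a2[unfolded e_def] eqG] .
qed



lemma sm_hpd: "smooth_on U E \<Longrightarrow> set ks \<subseteq> {..<4} \<Longrightarrow> k < 4 \<Longrightarrow> q \<in> U \<Longrightarrow>
   hpd k (pdl ks E) q (pdl (k # ks) E q)"
  unfolding smooth_on_def hpd_def by blast

lemma sm_cont: "smooth_on U E \<Longrightarrow> set ks \<subseteq> {..<4} \<Longrightarrow> continuous_on U (pdl ks E)"
  unfolding smooth_on_def by blast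

lemma sm_swap:
  assumes "open U" "smooth_on U E" "q \<in> U" "i < 4" "j < 4" "set ks \<subseteq> {..<4}"
  shows "pdl (i # j # ks) E q = pdl (j # i # ks) E q"
proof (cases "i = j")
  case False
  have s1: "set (i # ks) \<subseteq> {..<4}" "set (j # ks) \<subseteq> {..<4}" "set (i # j # ks) \<subseteq> {..<4}"
     "set (j # i # ks) \<subseteq> {..<4}" using assms by auto
  have "pdl (j # i # ks) E q = pdl (i # j # ks) E q"
    by (rule schwarz[OF assms(1,3,4,5) False, where G="pdl ks E" and Gi="pdl (i#ks) E" and Gj="pdl (j#ks) E"])
       (use assms s1 sm_hpd[OF assms(2)] sm_cont[OF assms(2)] in blast)+
  then show ?thesis by simp
qed simp

lemma sm_swap_gen:
  assumes "open U" "smooth_on U E" "i < 4" "j < 4" "set ks \<subseteq> {..<4}"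
  shows "q \<in> U \<Longrightarrow> pdl (ks1 @ i # j # ks) E q = pdl (ks1 @ j # i # ks) E q"
proof (induction ks1 arbitrary: q)
  case Nil
  then show ?case using sm_swap assms by simp
next
  case (Cons a ks1)
  then show ?case using pd_local[OF assms(1) Cons(2), of "pdl (ks1 @ i # j # ks) E" "pdl (ks1 @ j # i # ks) E" a]
    by simp
qed

section \<open>The projective factor\<close>

definition uu :: "pt \<Rightarrow> real" where "uu q = coord 3 q / coord 2 q"
definition wv :: "nat \<Rightarrow> pt \<Rightarrow> real" where "wv a q = (if a = 1 then - coord 3 q else coord 2 q)"
definition Jm :: "nat \<Rightarrow> nat \<Rightarrow> real" where
  "Jm c a = (if c = 1 \<and> a = 2 then 1 else if c = 2 \<and> a = 1 then -1 else 0)"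
definition dl :: "nat \<Rightarrow> nat \<Rightarrow> real" where "dl a b = (if a = b then 1 else 0)"

definition PP :: "(real \<Rightarrow> real) \<Rightarrow> pt \<Rightarrow> real" where "PP f q = coord 2 q * f (uu q)"
definition P1 :: "(real \<Rightarrow> real) \<Rightarrow> nat \<Rightarrow> pt \<Rightarrow> real" where
  "P1 f a q = (if a = 1 then f (uu q) - uu q * deriv f (uu q) else deriv f (uu q))"
definition P2 :: "(real \<Rightarrow> real) \<Rightarrow> nat \<Rightarrow> nat \<Rightarrow> pt \<Rightarrow> real" where
  "P2 f a b q = deriv (deriv f) (uu q) * wv a q * wv b q / coord 2 q ^ 3"
definition P3 :: "(real \<Rightarrow> real) \<Rightarrow> nat \<Rightarrow> nat \<Rightarrow> nat \<Rightarrow> pt \<Rightarrow> real" where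
  "P3 f a b c q = deriv (deriv (deriv f)) (uu q) * wv c q * wv a q * wv b q / coord 2 q ^ 5
     + deriv (deriv f) (uu q) * ((Jm c a * wv b q + wv a q * Jm c b) / coord 2 q ^ 3
         - 3 * dl c 1 * wv a q * wv b q / coord 2 q ^ 4)"

lemma dcomp:
  assumes "\<And>x. (F has_real_derivative F' x) (at x)" "(g has_real_derivative g') (at t)"
    "D = F' (g t) * g'"
  shows "((\<lambda>t. F (g t)) has_real_derivative D) (at t)"
  using DERIV_chain2[OF assms(1) assms(2)] assms(3) by simp

locale fsm =
  fixes f :: "real \<Rightarrow> real"
  assumes D0: "\<And>x. (f has_real_derivative deriv f x) (at x)"
      and D1: "\<And>x. (deriv f has_real_derivative deriv (deriv f) x) (at x)"
      and D2: "\<And>x. (deriv (deriv f) has_real_derivative deriv (deriv (deriv f)) x) (at x)"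
begin

lemma hpd_PP:
  assumes "coord 2 q \<noteq> 0" "c = 1 \<or> c = 2"
  shows "hpd (c + 1) (PP f) q (P1 f c q)"
proof -
  obtain x1 x2 y1 y2 where q: "q = (x1, x2, y1, y2)" by (cases q)
  show ?thesis using assms unfolding hpd_def PP_def P1_def uu_def q
    by (auto intro!: derivative_eq_intros dcomp[OF D0] simp: field_simps power2_eq_square)
qed


lemma hpd_P1:
  assumes "coord 2 q \<noteq> 0" "c = 1 \<or> c = 2" "a = 1 \<or> a = 2"
  shows "hpd (c + 1) (P1 f a) q (P2 f a c q)"
proof -
  obtain x1 x2 y1 y2 where q: "q = (x1, x2, y1, y2)" by (cases q)
  have y1: "y1 \<noteq> 0" using assms(1) q by simp
  from assms(2,3) consider "c = 1" "a = 1" | "c = 1" "a = 2" | "c = 2" "a = 1" | "c = 2" "a = 2" by blast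
  then show ?thesis
  proof cases
    case 1
    show ?thesis unfolding hpd_def P1_def P2_def uu_def wv_def q 1
      using y1 by (auto intro!: derivative_eq_intros dcomp[OF D0] dcomp[OF D1] simp: field_simps power2_eq_square power3_eq_cube)
  next
    case 2
    show ?thesis unfolding hpd_def P1_def P2_def uu_def wv_def q 2
      using y1 by (auto intro!: derivative_eq_intros dcomp[OF D0] dcomp[OF D1] simp: field_simps power2_eq_square power3_eq_cube)
  next
    case 3
    show ?thesis unfolding hpd_def P1_def P2_def uu_def wv_def q 3
      using y1 by (auto intro!: derivative_eq_intros dcomp[OF D0] dcomp[OF D1] simp: field_simps power2_eq_square power3_eq_cube)
  next
    case 4
    show ?thesis unfolding hpd_def P1_def P2_def uu_def wv_def q 4
      using y1 by (auto intro!: derivative_eq_intros dcomp[OF D0] dcomp[OF D1] simp: field_simps power2_eq_square power3_eq_cube)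
  qed
qed


lemma hpd_comp_uu:
  assumes "\<And>x. (F has_real_derivative F' x) (at x)" "coord 2 q \<noteq> 0" "c = 1 \<or> c = 2"
  shows "hpd (c + 1) (\<lambda>q. F (uu q)) q (F' (uu q) * wv c q / coord 2 q ^ 2)"
proof -
  obtain x1 x2 y1 y2 where q: "q = (x1, x2, y1, y2)" by (cases q)
  show ?thesis using assms(2,3) unfolding hpd_def uu_def wv_def q
    by (auto intro!: derivative_eq_intros dcomp[OF assms(1)] simp: field_simps power2_eq_square)
qed

lemma hpd_wv:
  assumes "c = 1 \<or> c = 2" "a = 1 \<or> a = 2"
  shows "hpd (c + 1) (wv a) q (Jm c a)"
proof -
  obtain x1 x2 y1 y2 where q: "q = (x1, x2, y1, y2)" by (cases q)
  show ?thesis using assms unfolding q hpd_def wv_def Jm_def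
    by (cases "a = 1"; cases "a = 2") (auto intro!: derivative_eq_intros)
qed

lemma hpd_ic:
  assumes "coord 2 q \<noteq> 0" "c = 1 \<or> c = 2"
  shows "hpd (c + 1) (\<lambda>q. 1 / coord 2 q ^ 3) q (- 3 * dl c 1 / coord 2 q ^ 4)"
proof -
  obtain x1 x2 y1 y2 where q: "q = (x1, x2, y1, y2)" by (cases q)
  show ?thesis using assms unfolding q hpd_def dl_def
    by (auto intro!: derivative_eq_intros simp: field_simps eval_nat_numeral)
qed

lemma hpd_W:
  assumes "coord 2 q \<noteq> 0" "c = 1 \<or> c = 2" "a = 1 \<or> a = 2" "b = 1 \<or> b = 2"
  shows "hpd (c + 1) (\<lambda>q. wv a q * wv b q / coord 2 q ^ 3) q
     ((Jm c a * wv b q + wv a q * Jm c b) / coord 2 q ^ 3 - 3 * dl c 1 * wv a q * wv b q / coord 2 q ^ 4)"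
proof -
  have e: "(\<lambda>q. wv a q * wv b q / coord 2 q ^ 3) = (\<lambda>q. (wv a q * wv b q) * (1 / coord 2 q ^ 3))"
    by auto
  show ?thesis unfolding e
    by (rule hpd_eq[OF hpd_mult[OF hpd_mult[OF hpd_wv[OF assms(2,3)] hpd_wv[OF assms(2,4)]] hpd_ic[OF assms(1,2)]]])
      (use assms in \<open>auto simp: field_simps eval_nat_numeral\<close>)
qed

lemma hpd_P2:
  assumes "coord 2 q \<noteq> 0" "c = 1 \<or> c = 2" "a = 1 \<or> a = 2" "b = 1 \<or> b = 2"
  shows "hpd (c + 1) (P2 f a b) q (P3 f a b c q)"
proof -
  have e: "P2 f a b = (\<lambda>q. deriv (deriv f) (uu q) * (wv a q * wv b q / coord 2 q ^ 3))"
    unfolding P2_def by auto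
  show ?thesis unfolding e
    by (rule hpd_eq[OF hpd_mult[OF hpd_comp_uu[OF D2 assms(1,2)] hpd_W[OF assms]]])
       (use assms(1) in \<open>simp add: P3_def field_simps eval_nat_numeral\<close>)
qed

end



declare One_nat_def[simp del]

lemma coord2_eq: "coord 2 = (\<lambda>q. fst (snd (snd q)))"
proof
  fix q :: pt show "coord 2 q = fst (snd (snd q))" by (cases q) auto
qed
lemma coord3_eq: "coord 3 = (\<lambda>q. snd (snd (snd q)))"
proof
  fix q :: pt show "coord 3 q = snd (snd (snd q))" by (cases q) auto
qed

lemma ycoord1[simp]: "ycoord 1 q = coord 2 q" unfolding ycoord_def by (simp add: one_add_one)
lemma ycoord2[simp]: "ycoord 2 q = coord 3 q" unfolding ycoord_def by (simp add: numeral_3_eq_3)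
lemma dY1[simp]: "dY 1 F = pd 2 F" unfolding dY_def by (simp add: one_add_one)
lemma dY2[simp]: "dY 2 F = pd 3 F" unfolding dY_def by (simp add: numeral_3_eq_3)
lemma dX1[simp]: "dX 1 F = pd 0 F" unfolding dX_def by simp
lemma dX2[simp]: "dX 2 F = pd 1 F" unfolding dX_def by (simp add: One_nat_def)


lemma cont_coord2: "continuous_on S (coord 2)"
  unfolding coord2_eq by (intro continuous_intros)
lemma cont_coord3: "continuous_on S (coord 3)"
  unfolding coord3_eq by (intro continuous_intros)

lemma open_sd: "open spray_domain"
proof -
  have "spray_domain = {q. coord 2 q \<noteq> 0}" unfolding spray_domain_def by simp
  also have "open \<dots>" by (rule open_Collect_neq) (auto intro: cont_coord2 continuous_intros)
  finally show ?thesis .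
qed

lemma sd_iff: "q \<in> spray_domain \<longleftrightarrow> coord 2 q \<noteq> 0"
  unfolding spray_domain_def by simp

lemma hpd_x0:
  assumes "\<And>t. F (upd m t q) = F q"
  shows "hpd m F q 0"
  unfolding hpd_def assms by simp

lemma coord_upd_x: "m < 2 \<Longrightarrow> coord 2 (upd m t q) = coord 2 q \<and> coord 3 (upd m t q) = coord 3 q"
  by (cases q) auto

lemma uu_upd_x: "m < 2 \<Longrightarrow> uu (upd m t q) = uu q"
  unfolding uu_def using coord_upd_x by simp
lemma wv_upd_x: "m < 2 \<Longrightarrow> wv a (upd m t q) = wv a q"
  unfolding wv_def using coord_upd_x by simp

lemma hpd_PP_x: "m < 2 \<Longrightarrow> hpd m (PP f) q 0"
  by (rule hpd_x0) (simp add: PP_def uu_upd_x coord_upd_x)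
lemma hpd_P1_x: "m < 2 \<Longrightarrow> hpd m (P1 f a) q 0"
  by (rule hpd_x0) (simp add: P1_def uu_upd_x coord_upd_x)
lemma hpd_P2_x: "m < 2 \<Longrightarrow> hpd m (P2 f a b) q 0"
  by (rule hpd_x0) (simp add: P2_def uu_upd_x coord_upd_x wv_upd_x)
lemma hpd_P3_x: "m < 2 \<Longrightarrow> hpd m (P3 f a b c) q 0"
  by (rule hpd_x0) (simp add: P3_def uu_upd_x coord_upd_x wv_upd_x)

lemma spray_eq: "l = 1 \<or> l = 2 \<Longrightarrow> spray_f f l = (\<lambda>q. coord (l + 1) q * PP f q)"
  by (rule ext) (auto simp: spray_f_def ycoord_def PP_def uu_def power2_eq_square)

definition S1f :: "(real \<Rightarrow> real) \<Rightarrow> nat \<Rightarrow> nat \<Rightarrow> pt \<Rightarrow> real" where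
  "S1f f l k q = coord (l + 1) q * P1 f k q + dl l k * PP f q"
definition S2f :: "(real \<Rightarrow> real) \<Rightarrow> nat \<Rightarrow> nat \<Rightarrow> nat \<Rightarrow> pt \<Rightarrow> real" where
  "S2f f l k j q = coord (l + 1) q * P2 f k j q + dl l j * P1 f k q + dl l k * P1 f j q"
definition S3f :: "(real \<Rightarrow> real) \<Rightarrow> nat \<Rightarrow> nat \<Rightarrow> nat \<Rightarrow> nat \<Rightarrow> pt \<Rightarrow> real" where
  "S3f f l k j i q = coord (l + 1) q * P3 f k j i q + dl l i * P2 f k j q + dl l j * P2 f k i q + dl l k * P2 f j i q"

context fsm
begin

lemma hpd_PP': "coord 2 q \<noteq> 0 \<Longrightarrow> c = 1 \<or> c = 2 \<Longrightarrow> hpd (c + 1) (PP f) q (P1 f c q)"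
  using hpd_PP by blast

lemma hpd_coordl: "l = 1 \<or> l = 2 \<Longrightarrow> c = 1 \<or> c = 2 \<Longrightarrow> hpd (c + 1) (coord (l + 1)) q (dl l c)"
  using hpd_coord[of "l + 1" "c + 1" q] unfolding dl_def by auto

lemma hpd_spray:
  assumes "coord 2 q \<noteq> 0" "l = 1 \<or> l = 2" "k = 1 \<or> k = 2"
  shows "hpd (k + 1) (spray_f f l) q (S1f f l k q)"
  unfolding spray_eq[OF assms(2)] S1f_def
  by (rule hpd_eq[OF hpd_mult[OF hpd_coordl[OF assms(2,3)] hpd_PP'[OF assms(1,3)]]]) simp

lemma hpd_S1f:
  assumes "coord 2 q \<noteq> 0" "l = 1 \<or> l = 2" "k = 1 \<or> k = 2" "j = 1 \<or> j = 2"
  shows "hpd (j + 1) (S1f f l k) q (S2f f l k j q)"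
proof -
  have e: "S1f f l k = (\<lambda>q. coord (l + 1) q * P1 f k q + dl l k * PP f q)"
    unfolding S1f_def by auto
  show ?thesis unfolding e S2f_def
    by (rule hpd_eq[OF hpd_add[OF hpd_mult[OF hpd_coordl[OF assms(2,4)] hpd_P1[OF assms(1,4,3)]]
        hpd_cmult[OF hpd_PP'[OF assms(1,4)]]]]) simp
qed

lemma hpd_S2f:
  assumes "coord 2 q \<noteq> 0" "l = 1 \<or> l = 2" "k = 1 \<or> k = 2" "j = 1 \<or> j = 2" "i = 1 \<or> i = 2"
  shows "hpd (i + 1) (S2f f l k j) q (S3f f l k j i q)"
proof -
  have e: "S2f f l k j = (\<lambda>q. coord (l + 1) q * P2 f k j q + dl l j * P1 f k q + dl l k * P1 f j q)"
    unfolding S2f_def by auto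
  show ?thesis unfolding e S3f_def
    by (rule hpd_eq[OF hpd_add[OF hpd_add[OF hpd_mult[OF hpd_coordl[OF assms(2,5)] hpd_P2[OF assms(1,5,3,4)]]
        hpd_cmult[OF hpd_P1[OF assms(1,5,3)]]] hpd_cmult[OF hpd_P1[OF assms(1,5,4)]]]]) simp
qed

lemma pd_spray1:
  assumes "q \<in> spray_domain" "l = 1 \<or> l = 2" "k = 1 \<or> k = 2"
  shows "pd (k + 1) (spray_f f l) q = S1f f l k q"
  using hpd_pd hpd_spray assms sd_iff by blast

lemma pd_spray2:
  assumes "q \<in> spray_domain" "l = 1 \<or> l = 2" "k = 1 \<or> k = 2" "j = 1 \<or> j = 2"
  shows "pd (j + 1) (pd (k + 1) (spray_f f l)) q = S2f f l k j q"
proof -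
  have "pd (j + 1) (pd (k + 1) (spray_f f l)) q = pd (j + 1) (S1f f l k) q"
    by (rule pd_local[OF open_sd assms(1)]) (use pd_spray1 assms in auto)
  also have "\<dots> = S2f f l k j q" using hpd_pd hpd_S1f assms sd_iff by blast
  finally show ?thesis .
qed

lemma pd_spray3:
  assumes "q \<in> spray_domain" "l = 1 \<or> l = 2" "k = 1 \<or> k = 2" "j = 1 \<or> j = 2" "i = 1 \<or> i = 2"
  shows "pd (i + 1) (pd (j + 1) (pd (k + 1) (spray_f f l))) q = S3f f l k j i q"
proof -
  have "pd (i + 1) (pd (j + 1) (pd (k + 1) (spray_f f l))) q = pd (i + 1) (S2f f l k j) q"
    by (rule pd_local[OF open_sd assms(1)]) (use pd_spray2 assms in auto)
  also have "\<dots> = S3f f l k j i q" using hpd_pd hpd_S2f assms sd_iff by blast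
  finally show ?thesis .
qed

lemma Gam1_eq:
  assumes "q \<in> spray_domain" "l = 1 \<or> l = 2" "i = 1 \<or> i = 2"
  shows "Gam1 f l i q = - (1/2) * S1f f l i q"
  unfolding Gam1_def dY_def using pd_spray1[OF assms] by simp

lemma Gam2_eq:
  assumes "q \<in> spray_domain" "l = 1 \<or> l = 2" "i = 1 \<or> i = 2" "k = 1 \<or> k = 2"
  shows "Gam2 f l i k q = - (1/2) * S2f f l i k q"
proof -
  have "Gam2 f l i k q = pd (k + 1) (\<lambda>q. - (1/2) * S1f f l i q) q"
    unfolding Gam2_def dY_def
    by (rule pd_local[OF open_sd assms(1)]) (use Gam1_eq assms in auto)
  also have "\<dots> = - (1/2) * S2f f l i k q"
    using hpd_pd hpd_cmult[OF hpd_S1f[of q l i k]] assms sd_iff by blast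
  finally show ?thesis .
qed

lemma berwald_eq:
  assumes "q \<in> spray_domain" "l = 1 \<or> l = 2" "i = 1 \<or> i = 2" "j = 1 \<or> j = 2" "k = 1 \<or> k = 2"
  shows "berwald f l i j k q = - (1/2) * S3f f l k j i q"
  unfolding berwald_def dY_def using pd_spray3[OF assms(1,2,5,4,3)] by simp

lemma cont_phi2: "continuous_on spray_domain (\<lambda>q. deriv (deriv f) (uu q))"
proof -
  have c: "continuous_on UNIV (deriv (deriv f))"
    using D2 DERIV_isCont continuous_at_imp_continuous_on by blast
  have "continuous_on spray_domain uu"
    unfolding uu_def by (intro continuous_intros cont_coord2 cont_coord3) (auto simp: sd_iff)
  then show ?thesis using continuous_on_compose2[OF c] by blast
qed

end



lemma hpd_add_eq: "hpd k F p a \<Longrightarrow> hpd k G p b \<Longrightarrow> D = a + b \<Longrightarrow> hpd k (\<lambda>q. F q + G q) p D"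
  using hpd_add by simp
lemma hpd_diff_eq: "hpd k F p a \<Longrightarrow> hpd k G p b \<Longrightarrow> D = a - b \<Longrightarrow> hpd k (\<lambda>q. F q - G q) p D"
  using hpd_diff by simp
lemma hpd_mult_eq: "hpd k F p a \<Longrightarrow> hpd k G p b \<Longrightarrow> D = F p * b + a * G p \<Longrightarrow> hpd k (\<lambda>q. F q * G q) p D"
  using hpd_mult by simp
lemma hpd_minus_eq: "hpd k F p a \<Longrightarrow> D = - a \<Longrightarrow> hpd k (\<lambda>q. - F q) p D"
  using hpd_minus by simp
lemma hpd_const_eq: "D = 0 \<Longrightarrow> hpd k (\<lambda>q. c) p D"
  using hpd_const by simp
lemma hpd_coord_eq: "j < 4 \<Longrightarrow> k < 4 \<Longrightarrow> D = (if j = k then 1 else 0) \<Longrightarrow> hpd k (coord j) p D"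
  using hpd_coord by simp

lemma hpd_divide_eq: "hpd k F p a \<Longrightarrow> D = a / c \<Longrightarrow> hpd k (\<lambda>q. F q / c) p D"
  unfolding hpd_def using DERIV_cdivide by fastforce

lemma P22m: "coord 2 q \<noteq> 0 \<Longrightarrow> P2 f 2 2 q * coord 2 q ^ 3 = deriv (deriv f) (uu q) * coord 2 q * coord 2 q"
  unfolding P2_def wv_def by simp
lemma P222m: "coord 2 q \<noteq> 0 \<Longrightarrow> P3 f 2 2 2 q * coord 2 q ^ 5 = deriv (deriv (deriv f)) (uu q) * coord 2 q * coord 2 q * coord 2 q"
  unfolding P3_def wv_def Jm_def dl_def by simp
lemma eu2: "coord 2 q \<noteq> 0 \<Longrightarrow> coord 2 q * P2 f 1 2 q + coord 3 q * P2 f 2 2 q = 0"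
  unfolding P2_def wv_def by simp
lemma heu: "(y::real) \<noteq> 0 \<Longrightarrow> y * (a - z * b / y) + z * b = y * a"
  by (simp add: right_diff_distrib)
lemma eu1: "coord 2 q \<noteq> 0 \<Longrightarrow> coord 2 q * P1 f 1 q + coord 3 q * P1 f 2 q = PP f q"
  unfolding P1_def PP_def uu_def using heu by simp

lemmas hpd_I = hpd_divide_eq hpd_add_eq hpd_diff_eq hpd_mult_eq hpd_minus_eq hpd_const_eq hpd_coord_eq

locale ctx = fsm f for f +
  fixes U :: "pt set" and E :: "pt \<Rightarrow> real"
  assumes oU: "open U" and Usub: "U \<subseteq> spray_domain" and sm: "smooth_on U E"
    and HH: "\<forall>q\<in>U. cond_H E q" and EL: "\<forall>q\<in>U. cond_EL f E q" and LS: "\<forall>q\<in>U. cond_Ls f E q"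
    and PD: "\<forall>q\<in>U. pos_def_at E q"
begin

lemma y1nz: "q \<in> U \<Longrightarrow> coord 2 q \<noteq> 0"
  using Usub sd_iff by blast

lemma hE0: "q \<in> U \<Longrightarrow> k < 4 \<Longrightarrow> hpd k E q (pd k E q)"
  using sm_hpd[OF sm, of "[]" k q] by simp
lemma hE1: "q \<in> U \<Longrightarrow> k < 4 \<Longrightarrow> j < 4 \<Longrightarrow> hpd k (pd j E) q (pd k (pd j E) q)"
  using sm_hpd[OF sm, of "[j]" k q] by simp
lemma hE2: "q \<in> U \<Longrightarrow> k < 4 \<Longrightarrow> j < 4 \<Longrightarrow> i < 4 \<Longrightarrow> hpd k (pd j (pd i E)) q (pd k (pd j (pd i E)) q)"
  using sm_hpd[OF sm, of "[j, i]" k q] by simp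

lemma sw2: "q \<in> U \<Longrightarrow> i < 4 \<Longrightarrow> j < 4 \<Longrightarrow> pd i (pd j E) q = pd j (pd i E) q"
  using sm_swap[OF oU sm, of q i j "[]"] by simp
lemma sw3o: "q \<in> U \<Longrightarrow> i < 4 \<Longrightarrow> j < 4 \<Longrightarrow> a < 4 \<Longrightarrow> pd i (pd j (pd a E)) q = pd j (pd i (pd a E)) q"
  using sm_swap[OF oU sm, of q i j "[a]"] by simp
lemma sw3i: "q \<in> U \<Longrightarrow> i < 4 \<Longrightarrow> j < 4 \<Longrightarrow> a < 4 \<Longrightarrow> pd a (pd i (pd j E)) q = pd a (pd j (pd i E)) q"
  using sm_swap_gen[OF oU sm, of i j "[]" q "[a]"] by simp

lemma zU: "(\<And>q. q \<in> U \<Longrightarrow> F q = 0) \<Longrightarrow> q \<in> U \<Longrightarrow> hpd k F q D \<Longrightarrow> D = 0"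
  using hpd_zero[OF oU] by blast
lemma eqU: "(\<And>q. q \<in> U \<Longrightarrow> F q = G q) \<Longrightarrow> q \<in> U \<Longrightarrow> hpd k G q D \<Longrightarrow> pd k F q = D"
  using pd_local[OF oU] hpd_pd by metis

lemma hPP2: "q \<in> U \<Longrightarrow> hpd 2 (PP f) q (P1 f 1 q)"
  using hpd_PP[of q 1] y1nz by (simp add: one_add_one)
lemma hPP3: "q \<in> U \<Longrightarrow> hpd 3 (PP f) q (P1 f 2 q)"
  using hpd_PP[of q 2] y1nz by (simp add: numeral_3_eq_3)
lemma hP12: "q \<in> U \<Longrightarrow> a = 1 \<or> a = 2 \<Longrightarrow> hpd 2 (P1 f a) q (P2 f a 1 q)"
  using hpd_P1[of q 1 a] y1nz by (simp add: one_add_one)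
lemma hP13: "q \<in> U \<Longrightarrow> a = 1 \<or> a = 2 \<Longrightarrow> hpd 3 (P1 f a) q (P2 f a 2 q)"
  using hpd_P1[of q 2 a] y1nz by (simp add: numeral_3_eq_3)
lemma hP22: "q \<in> U \<Longrightarrow> a = 1 \<or> a = 2 \<Longrightarrow> b = 1 \<or> b = 2 \<Longrightarrow> hpd 2 (P2 f a b) q (P3 f a b 1 q)"
  using hpd_P2[of q 1 a b] y1nz by (simp add: one_add_one)
lemma hP23: "q \<in> U \<Longrightarrow> a = 1 \<or> a = 2 \<Longrightarrow> b = 1 \<or> b = 2 \<Longrightarrow> hpd 3 (P2 f a b) q (P3 f a b 2 q)"
  using hpd_P2[of q 2 a b] y1nz by (simp add: numeral_3_eq_3)
lemma hPx: "hpd 0 (PP f) q 0" "hpd 1 (PP f) q 0" "hpd 0 (P1 f a) q 0" "hpd 1 (P1 f a) q 0"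
  "hpd 0 (P2 f a b) q 0" "hpd 1 (P2 f a b) q 0" "hpd 0 (P3 f a b c) q 0" "hpd 1 (P3 f a b c) q 0"
  by (auto intro: hpd_PP_x hpd_P1_x hpd_P2_x hpd_P3_x)

lemma eqI_hpd: "hpd k F q a \<Longrightarrow> a = b \<Longrightarrow> hpd k F q b" by simp

lemmas hR = hPP2 hPP3 hP12 hP13 hP22 hP23 hPx hE0 hE1 hE2

section \<open>Homogeneity\<close>

lemma H0: "q \<in> U \<Longrightarrow> coord 2 q * pd 2 E q + coord 3 q * pd 3 E q = 2 * E q"
  using HH unfolding cond_H_def Idx_def by (simp add: dY_def ycoord_def one_add_one numeral_3_eq_3)

lemma Hd: assumes q: "q \<in> U" and k: "k < 4"
  shows "(if k = 2 then pd 2 E q else 0) + (if k = 3 then pd 3 E q else 0)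
     + coord 2 q * pd k (pd 2 E) q + coord 3 q * pd k (pd 3 E) q - 2 * pd k E q = 0"
  apply (rule zU[of "\<lambda>q. coord 2 q * pd 2 E q + coord 3 q * pd 3 E q - 2 * E q" q k, OF _ q])
  using H0 apply simp
  using q k by (auto intro!: hpd_I hR)

lemma A12: "q \<in> U \<Longrightarrow> coord 2 q * pd 2 (pd 2 E) q + coord 3 q * pd 2 (pd 3 E) q = pd 2 E q"
  using Hd[of q 2] by simp
lemma A13: "q \<in> U \<Longrightarrow> coord 2 q * pd 3 (pd 2 E) q + coord 3 q * pd 3 (pd 3 E) q = pd 3 E q"
  using Hd[of q 3] by simp
lemma B0: "q \<in> U \<Longrightarrow> coord 2 q * pd 0 (pd 2 E) q + coord 3 q * pd 0 (pd 3 E) q = 2 * pd 0 E q"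
  using Hd[of q 0] by simp
lemma B1: "q \<in> U \<Longrightarrow> coord 2 q * pd 1 (pd 2 E) q + coord 3 q * pd 1 (pd 3 E) q = 2 * pd 1 E q"
  using Hd[of q 1] by simp
lemma SYM: "q \<in> U \<Longrightarrow> pd 3 (pd 2 E) q = pd 2 (pd 3 E) q"
  using sw2 by simp

lemma A2: assumes q: "q \<in> U"
  shows "coord 2 q * pd 3 (pd 3 (pd 2 E)) q + coord 3 q * pd 3 (pd 3 (pd 3 E)) q = 0"
proof -
  have "coord 2 q * pd 3 (pd 3 (pd 2 E)) q + coord 3 q * pd 3 (pd 3 (pd 3 E)) q = 0"
    apply (rule zU[of "\<lambda>q. coord 2 q * pd 3 (pd 2 E) q + coord 3 q * pd 3 (pd 3 E) q - pd 3 E q" q 3, OF _ q])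
    using A13 apply simp
    using q by (auto intro!: hpd_I hR)
  then show ?thesis .
qed

lemma EPOS: assumes q: "q \<in> U" shows "E q > 0"
proof -
  have "pos_def_at E q" using PD q by blast
  then have "(\<Sum>i\<in>Idx. \<Sum>j\<in>Idx. gmet E i j q * ycoord i q * ycoord j q) > 0"
    unfolding pos_def_at_def using y1nz[OF q]
    apply (elim allE[of _ "\<lambda>i. ycoord i q"])
    by (auto simp: Idx_def)
  also have "(\<Sum>i\<in>Idx. \<Sum>j\<in>Idx. gmet E i j q * ycoord i q * ycoord j q) =
     coord 2 q * (coord 2 q * pd 2 (pd 2 E) q + coord 3 q * pd 2 (pd 3 E) q)
     + coord 3 q * (coord 2 q * pd 3 (pd 2 E) q + coord 3 q * pd 3 (pd 3 E) q)"
    by (simp add: Idx_def gmet_def algebra_simps)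
  also have "\<dots> = 2 * E q" using A12[OF q] A13[OF q] H0[OF q] by simp
  finally show ?thesis by simp
qed

lemma EL1: assumes q: "q \<in> U"
  shows "coord 2 q * pd 0 (pd 2 E) q + coord 3 q * pd 1 (pd 2 E) q + PP f q * pd 2 E q - pd 0 E q = 0"
proof -
  have "coord 2 q * pd 0 (pd 2 E) q + coord 3 q * pd 1 (pd 2 E) q
     + (coord 2 q * PP f q * pd 2 (pd 2 E) q + coord 3 q * PP f q * pd 3 (pd 2 E) q) - pd 0 E q = 0"
    using EL q unfolding cond_EL_def Idx_def by (simp add: spray_eq)
  moreover have "coord 2 q * PP f q * pd 2 (pd 2 E) q + coord 3 q * PP f q * pd 3 (pd 2 E) q = PP f q * pd 2 E q"
    using A12[OF q] SYM[OF q] by (simp add: algebra_simps) (metis distrib_left mult.commute)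
  ultimately show ?thesis by simp
qed

lemma EL2: assumes q: "q \<in> U"
  shows "coord 2 q * pd 0 (pd 3 E) q + coord 3 q * pd 1 (pd 3 E) q + PP f q * pd 3 E q - pd 1 E q = 0"
proof -
  have "coord 2 q * pd 0 (pd 3 E) q + coord 3 q * pd 1 (pd 3 E) q
     + (coord 2 q * PP f q * pd 2 (pd 3 E) q + coord 3 q * PP f q * pd 3 (pd 3 E) q) - pd 1 E q = 0"
    using EL q unfolding cond_EL_def Idx_def by (simp add: spray_eq)
  moreover have "coord 2 q * PP f q * pd 2 (pd 3 E) q + coord 3 q * PP f q * pd 3 (pd 3 E) q = PP f q * pd 3 E q"
    using A13[OF q] SYM[OF q] by (simp add: algebra_simps) (metis distrib_left mult.commute)
  ultimately show ?thesis by simp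
qed

lemma SS: assumes q: "q \<in> U"
  shows "coord 2 q * pd 0 E q + coord 3 q * pd 1 E q = - 2 * PP f q * E q"
  using EL1[OF q] EL2[OF q] B0[OF q] B1[OF q] H0[OF q] by algebra

lemma D10: assumes q: "q \<in> U"
  shows "pd 0 E q = - (P1 f 1 q * E q + 1/2 * PP f q * pd 2 E q)"
proof -
  have "pd 0 E q + coord 2 q * pd 2 (pd 0 E) q + coord 3 q * pd 2 (pd 1 E) q
      + 2 * (PP f q * pd 2 E q + P1 f 1 q * E q) = 0"
    apply (rule zU[of "\<lambda>q. coord 2 q * pd 0 E q + coord 3 q * pd 1 E q + 2 * PP f q * E q" q 2, OF _ q])
    using SS apply simp
    using q by (auto intro!: hpd_I hR simp: algebra_simps)
  moreover have "pd 2 (pd 0 E) q = pd 0 (pd 2 E) q" "pd 2 (pd 1 E) q = pd 1 (pd 2 E) q"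
    using sw2[OF q] by auto
  ultimately show ?thesis using EL1[OF q] by algebra
qed

lemma D11: assumes q: "q \<in> U"
  shows "pd 1 E q = - (P1 f 2 q * E q + 1/2 * PP f q * pd 3 E q)"
proof -
  have "pd 1 E q + coord 2 q * pd 3 (pd 0 E) q + coord 3 q * pd 3 (pd 1 E) q
      + 2 * (PP f q * pd 3 E q + P1 f 2 q * E q) = 0"
    apply (rule zU[of "\<lambda>q. coord 2 q * pd 0 E q + coord 3 q * pd 1 E q + 2 * PP f q * E q" q 3, OF _ q])
    using SS apply simp
    using q by (auto intro!: hpd_I hR simp: algebra_simps)
  moreover have "pd 3 (pd 0 E) q = pd 0 (pd 3 E) q" "pd 3 (pd 1 E) q = pd 1 (pd 3 E) q"
    using sw2[OF q] by auto
  ultimately show ?thesis using EL2[OF q] by algebra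
qed

lemma D1d0: assumes q: "q \<in> U"
  shows "pd 3 (pd 0 E) q = - (P1 f 1 q * pd 3 E q + P2 f 1 2 q * E q
            + 1/2 * (PP f q * pd 3 (pd 2 E) q + P1 f 2 q * pd 2 E q))"
  apply (rule eqU[of "pd 0 E" "\<lambda>q. - (P1 f 1 q * E q + 1/2 * PP f q * pd 2 E q)", OF D10 q])
  using q by (auto intro!: hpd_I hR simp: algebra_simps)

lemma D1d1: assumes q: "q \<in> U"
  shows "pd 3 (pd 1 E) q = - (P1 f 2 q * pd 3 E q + P2 f 2 2 q * E q
            + 1/2 * (PP f q * pd 3 (pd 3 E) q + P1 f 2 q * pd 3 E q))"
  apply (rule eqU[of "pd 1 E" "\<lambda>q. - (P1 f 2 q * E q + 1/2 * PP f q * pd 3 E q)", OF D11 q])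
  using q by (auto intro!: hpd_I hR simp: algebra_simps)

lemma D1dd: assumes q: "q \<in> U"
  shows "pd 3 (pd 3 (pd 1 E)) q = - (P1 f 2 q * pd 3 (pd 3 E) q + P2 f 2 2 q * pd 3 E q
            + P2 f 2 2 q * pd 3 E q + P3 f 2 2 2 q * E q
            + 1/2 * (PP f q * pd 3 (pd 3 (pd 3 E)) q + P1 f 2 q * pd 3 (pd 3 E) q
                     + P1 f 2 q * pd 3 (pd 3 E) q + P2 f 2 2 q * pd 3 E q))"
  apply (rule eqU[of "pd 3 (pd 1 E)" "\<lambda>q. - (P1 f 2 q * pd 3 E q + P2 f 2 2 q * E q
            + 1/2 * (PP f q * pd 3 (pd 3 E) q + P1 f 2 q * pd 3 E q))", OF D1d1 q])
  using q by (auto intro!: hpd_I hR simp: algebra_simps) (simp_all add: field_simps)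

lemma Ls222: assumes q: "q \<in> U"
  shows "pd 1 (pd 3 (pd 3 E)) q - (Gam1 f 1 2 q * pd 2 (pd 3 (pd 3 E)) q + Gam1 f 2 2 q * pd 3 (pd 3 (pd 3 E)) q)
     - (Gam2 f 1 2 2 q * pd 2 (pd 3 E) q + Gam2 f 2 2 2 q * pd 3 (pd 3 E) q)
     - (Gam2 f 1 2 2 q * pd 2 (pd 3 E) q + Gam2 f 2 2 2 q * pd 3 (pd 3 E) q) = 0"
proof -
  have c: "cond_Ls f E q" using LS q by blast
  have "\<forall>i\<in>{1,2::nat}. \<forall>j\<in>{1,2::nat}. \<forall>k\<in>{1,2::nat}.
      dX i (gmet E j k) q - (\<Sum>l\<in>{1,2}. Gam1 f l i q * dY l (gmet E j k) q)
      - (\<Sum>l\<in>{1,2}. Gam2 f l i k q * gmet E l j q)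
      - (\<Sum>l\<in>{1,2}. Gam2 f l i j q * gmet E l k q) = 0"
    using c unfolding cond_Ls_def Idx_def by blast
  then have "dX 2 (gmet E 2 2) q - (\<Sum>l\<in>{1,2}. Gam1 f l 2 q * dY l (gmet E 2 2) q)
      - (\<Sum>l\<in>{1,2}. Gam2 f l 2 2 q * gmet E l 2 q)
      - (\<Sum>l\<in>{1,2}. Gam2 f l 2 2 q * gmet E l 2 q) = 0" by blast
  then show ?thesis by (simp add: gmet_def)
qed

lemma Istar: assumes q: "q \<in> U"
  shows "2 * E q * P3 f 2 2 2 q + 3 * pd 3 E q * P2 f 2 2 q = 0"
proof -
  have sd: "q \<in> spray_domain" using q Usub by blast
  have g1: "Gam1 f 1 2 q = - (1/2) * (coord 2 q * P1 f 2 q)"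
    using Gam1_eq[OF sd, of 1 2] by (simp add: S1f_def dl_def one_add_one)
  have g2: "Gam1 f 2 2 q = - (1/2) * (coord 3 q * P1 f 2 q + PP f q)"
    using Gam1_eq[OF sd, of 2 2] by (simp add: S1f_def dl_def numeral_3_eq_3)
  have g3: "Gam2 f 1 2 2 q = - (1/2) * (coord 2 q * P2 f 2 2 q)"
    using Gam2_eq[OF sd, of 1 2 2] by (simp add: S2f_def dl_def one_add_one)
  have g4: "Gam2 f 2 2 2 q = - (1/2) * (coord 3 q * P2 f 2 2 q + 2 * P1 f 2 q)"
    using Gam2_eq[OF sd, of 2 2 2] by (simp add: S2f_def dl_def numeral_3_eq_3)
  have s1: "pd 1 (pd 3 (pd 3 E)) q = pd 3 (pd 3 (pd 1 E)) q"
    using sw3o[OF q, of 1 3 3] sw3i[OF q, of 1 3 3] by simp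
  have s2: "pd 2 (pd 3 (pd 3 E)) q = pd 3 (pd 3 (pd 2 E)) q"
    using sw3o[OF q, of 2 3 3] sw3i[OF q, of 2 3 3] by simp
  show ?thesis
    using Ls222[OF q] g1 g2 g3 g4 s1 s2 D1dd[OF q] A2[OF q] A13[OF q] SYM[OF q] by algebra
qed


lemma II: assumes q: "q \<in> U" and m: "m = 0 \<or> m = 1"
  shows "2 * pd m E q * P3 f 2 2 2 q + 3 * pd m (pd 3 E) q * P2 f 2 2 q = 0"
proof -
  have "2 * pd m E q * P3 f 2 2 2 q + 3 * pd m (pd 3 E) q * P2 f 2 2 q = 0"
    apply (rule zU[of "\<lambda>q. 2 * E q * P3 f 2 2 2 q + 3 * pd 3 E q * P2 f 2 2 q" q m, OF _ q])
    using Istar apply simp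
    using q m by (auto intro!: hpd_I hR)
  then show ?thesis .
qed


lemma Dfact: assumes q: "q \<in> U" and S: "P2 f 2 2 q \<noteq> 0"
  shows "PP f q * pd 3 E q = 2 * E q * P1 f 2 q"
proof -
  have y: "coord 2 q \<noteq> 0" using y1nz[OF q] .
  have k: "E q * pd 3 (pd m E) q = pd 3 E q * pd m E q" if m: "m = 0 \<or> m = 1" for m
  proof -
    have sw: "pd m (pd 3 E) q = pd 3 (pd m E) q" using sw2[OF q, of m 3] m by auto
    have i2: "2 * pd m E q * P3 f 2 2 2 q + 3 * pd 3 (pd m E) q * P2 f 2 2 q = 0"
      using II[OF q m] unfolding sw .
    have "P2 f 2 2 q * (E q * pd 3 (pd m E) q - pd 3 E q * pd m E q) = 0"
      using Istar[OF q] i2 by algebra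
    then show ?thesis using S by simp
  qed
  have yb: "coord 2 q * pd 3 (pd 0 E) q + coord 3 q * pd 3 (pd 1 E) q = - (3/2 * PP f q * pd 3 E q + P1 f 2 q * E q)"
  proof -
    have "coord 2 q * pd 3 (pd 0 E) q + coord 3 q * pd 3 (pd 1 E) q =
      - (pd 3 E q * (coord 2 q * P1 f 1 q + coord 3 q * P1 f 2 q) + E q * (coord 2 q * P2 f 1 2 q + coord 3 q * P2 f 2 2 q)
         + 1/2 * (P1 f 2 q * (coord 2 q * pd 2 E q + coord 3 q * pd 3 E q)
         + PP f q * (coord 2 q * pd 3 (pd 2 E) q + coord 3 q * pd 3 (pd 3 E) q)))"
      unfolding D1d0[OF q] D1d1[OF q] by (simp add: algebra_simps)
    also have "\<dots> = - (pd 3 E q * PP f q + E q * 0 + 1/2 * (P1 f 2 q * (2 * E q) + PP f q * pd 3 E q))"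
      unfolding eu1[OF y] eu2[OF y] H0[OF q] A13[OF q] by simp
    finally show ?thesis by (simp add: algebra_simps)
  qed
  have "E q * (coord 2 q * pd 3 (pd 0 E) q + coord 3 q * pd 3 (pd 1 E) q) =
        pd 3 E q * (coord 2 q * pd 0 E q + coord 3 q * pd 1 E q)"
  proof -
    have k0: "E q * pd 3 (pd 0 E) q = pd 3 E q * pd 0 E q" using k[of 0] by simp
    have k1: "E q * pd 3 (pd 1 E) q = pd 3 E q * pd 1 E q" using k[of 1] by simp
    show ?thesis using k0 k1 by algebra
  qed
  then have "E q * (- (3/2 * PP f q * pd 3 E q + P1 f 2 q * E q)) = pd 3 E q * (- 2 * PP f q * E q)"
    unfolding yb SS[OF q] .
  then have "E q * (PP f q * pd 3 E q - 2 * E q * P1 f 2 q) = 0"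
    by algebra
  then show ?thesis using EPOS[OF q] by simp
qed

lemma cont_P22: "continuous_on U (P2 f 2 2)"
proof -
  have e: "P2 f 2 2 q = deriv (deriv f) (uu q) * coord 2 q * coord 2 q / coord 2 q ^ 3" for q
    unfolding P2_def wv_def by simp
  have "continuous_on spray_domain (\<lambda>q. deriv (deriv f) (uu q) * coord 2 q * coord 2 q / coord 2 q ^ 3)"
    by (intro continuous_intros cont_phi2 cont_coord2) (auto simp: sd_iff)
  then have "continuous_on U (\<lambda>q. deriv (deriv f) (uu q) * coord 2 q * coord 2 q / coord 2 q ^ 3)"
    using continuous_on_subset Usub by blast
  then show ?thesis unfolding e[abs_def] .
qed

lemma final: assumes p: "p \<in> U" and S: "P2 f 2 2 p \<noteq> 0" shows False
proof -
  define V where "V = U \<inter> P2 f 2 2 -` (- {0})"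
  have oV: "open V" unfolding V_def by (rule continuous_open_preimage[OF cont_P22 oU]) auto
  have pV: "p \<in> V" using p S unfolding V_def by auto
  have VU: "V \<subseteq> U" unfolding V_def by auto
  have beta: "PP f p * pd 3 (pd 3 E) p + P1 f 2 p * pd 3 E p - 2 * (pd 3 E p * P1 f 2 p + E p * P2 f 2 2 p) = 0"
    apply (rule hpd_zero[OF oV pV, of "\<lambda>q. PP f q * pd 3 E q - 2 * E q * P1 f 2 q" 3])
    using Dfact VU unfolding V_def apply force
    using p by (auto intro!: hpd_I hR)
  have sw: "pd 1 (pd 3 E) p = pd 3 (pd 1 E) p" using sw2[OF p, of 1 3] by simp
  have i2: "2 * pd 1 E p * P3 f 2 2 2 p + 3 * pd 3 (pd 1 E) p * P2 f 2 2 p = 0"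
    using II[OF p, of 1] unfolding sw by simp
  have "P2 f 2 2 p * (E p * pd 3 (pd 1 E) p - pd 3 E p * pd 1 E p) = 0"
    using Istar[OF p] i2 by algebra
  then have k1: "E p * pd 3 (pd 1 E) p = pd 3 E p * pd 1 E p" using S by simp
  have "P2 f 2 2 p * E p * E p = 0"
    using k1 D11[OF p] D1d1[OF p] Dfact[OF p S] beta by algebra
  then show False using S EPOS[OF p] by simp
qed

lemma S_nz:
  assumes p: "p \<in> U" and l: "l \<in> Idx" and i: "i \<in> Idx" and j: "j \<in> Idx" and k: "k \<in> Idx"
    and B: "berwald f l i j k p \<noteq> 0"
  shows "P2 f 2 2 p \<noteq> 0"
proof
  assume S0: "P2 f 2 2 p = 0"
  have y: "coord 2 p \<noteq> 0" using y1nz[OF p] .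
  have "deriv (deriv f) (uu p) * coord 2 p * coord 2 p = 0" using P22m[OF y, of f] S0 by simp
  then have f2: "deriv (deriv f) (uu p) = 0" using y by simp
  have "2 * E p * P3 f 2 2 2 p = 0" using Istar[OF p] S0 by simp
  then have "P3 f 2 2 2 p = 0" using EPOS[OF p] by simp
  then have "deriv (deriv (deriv f)) (uu p) * coord 2 p * coord 2 p * coord 2 p = 0"
    using P222m[OF y, of f] by simp
  then have f3: "deriv (deriv (deriv f)) (uu p) = 0" using y by simp
  have sd: "p \<in> spray_domain" using p Usub by blast
  have "berwald f l i j k p = - (1/2) * S3f f l k j i p"
    by (rule berwald_eq[OF sd]) (use l i j k in \<open>auto simp: Idx_def\<close>)
  also have "\<dots> = 0" unfolding S3f_def P3_def P2_def f2 f3 by simp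
  finally show False using B by simp
qed

end

lemma fsm_of_analytic: "real_analytic f \<Longrightarrow> fsm f"
proof -
  assume a: "real_analytic f"
  have a1: "real_analytic (deriv f)" using real_analytic_deriv[OF a] by blast
  have a2: "real_analytic (deriv (deriv f))" using real_analytic_deriv[OF a1] by blast
  show "fsm f"
    by unfold_locales (use real_analytic_deriv[OF a] real_analytic_deriv[OF a1] real_analytic_deriv[OF a2] in blast)+
qed

theorem mainTheorem14:
  fixes f :: "real \<Rightarrow> real"
  assumes "real_analytic f" and "\<exists>t. f t \<noteq> 0"
  shows "\<not> (\<exists>U E. open U \<and> U \<subseteq> spray_domain
              \<and> (\<exists>p\<in>U. \<exists>l\<in>Idx. \<exists>i\<in>Idx. \<exists>j\<in>Idx. \<exists>k\<in>Idx. berwald f l i j k p \<noteq> 0)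
              \<and> smooth_on U E
              \<and> (\<forall>p\<in>U. cond_H E p \<and> cond_EL f E p \<and> cond_Ls f E p \<and> pos_def_at E p))"
proof
  assume "\<exists>U E. open U \<and> U \<subseteq> spray_domain
              \<and> (\<exists>p\<in>U. \<exists>l\<in>Idx. \<exists>i\<in>Idx. \<exists>j\<in>Idx. \<exists>k\<in>Idx. berwald f l i j k p \<noteq> 0)
              \<and> smooth_on U E
              \<and> (\<forall>p\<in>U. cond_H E p \<and> cond_EL f E p \<and> cond_Ls f E p \<and> pos_def_at E p)"
  then obtain U E where oU: "open U" and sub: "U \<subseteq> spray_domain"
    and B: "\<exists>p\<in>U. \<exists>l\<in>Idx. \<exists>i\<in>Idx. \<exists>j\<in>Idx. \<exists>k\<in>Idx. berwald f l i j k p \<noteq> 0"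
    and sm: "smooth_on U E"
    and C: "\<forall>p\<in>U. cond_H E p \<and> cond_EL f E p \<and> cond_Ls f E p \<and> pos_def_at E p"
    by blast
  interpret fsm f using fsm_of_analytic[OF assms(1)] .
  interpret ctx f U E
    by unfold_locales (use oU sub sm C in auto)
  obtain p l i j k where p: "p \<in> U" "l \<in> Idx" "i \<in> Idx" "j \<in> Idx" "k \<in> Idx"
    "berwald f l i j k p \<noteq> 0" using B by blast
  show False using final[OF p(1) S_nz[OF p]] .
qed


end
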